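(* Break the segment $[0,1]$ at two independent uniformly random points into three pieces, and let $A$ denote the area of the triangle with these three side lengths when it exists. Let $A_0 \in (0, \sqrt{3}/36)$. Then, given that a triangle can be formed, the probability that its area exceeds $A_0$ is \[ \mathbb P(A > A_0) = 4\int_{\mu_1}^{\mu_2} \sqrt{k^2(1-k^2)^2 - (8A_0)^2} \; dk, \] where $0 < \mu_1 < \mu_2 < 1$ are the two roots in $(0,1)$ of the polynomial $k(1-k^2) - 8A_0$.
   Context: Three lengths form a triangle iff each is less than the sum of the other two (equivalently, each is less than $1/2$ when they sum to $1$). *)

theory Defs
  imports "HOL-Probability.Probability"
begin

definition break_space :: "(real \<times> real) measure" where
  "break_space = uniform_measure lborel {0..1} \<Otimes>\<^sub>M uniform_measure lborel {0..1}"

definition pieces :: "real \<Rightarrow> real \<Rightarrow> real \<times> real \<times> real" where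
  "pieces x y = (min x y, \<bar>x - y\<bar>, 1 - max x y)"

definition is_triangle :: "real \<times> real \<times> real \<Rightarrow> bool" where
  "is_triangle t = (case t of (a, b, c) \<Rightarrow> a < b + c \<and> b < a + c \<and> c < a + b)"

definition tri_area :: "real \<times> real \<times> real \<Rightarrow> real" where
  "tri_area t = (case t of (a, b, c) \<Rightarrow>
     (let s = (a + b + c) / 2 in sqrt (s * (s - a) * (s - b) * (s - c))))"

end

theory Submission
  imports Defs
begin

lemma sets_bs: "sets break_space = sets (borel \<Otimes>\<^sub>M borel)" unfolding break_space_def
  by (intro sets_pair_measure_cong) auto

lemma slice_lemma:
  assumes X: "X \<in> sets (borel \<Otimes>\<^sub>M borel)"
  shows "emeasure break_space X = (\<integral>\<^sup>+x. emeasure lborel {y\<in>{0..1}. (x,y) \<in> X} * indicator {0..1} x \<partial>lborel)"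
proof -
  define U where "U = uniform_measure lborel {0..(1::real)}"
  have sU[simp]: "sets U = sets borel" unfolding U_def by simp
  interpret U: prob_space U unfolding U_def by (intro prob_space_uniform_measure) auto
  have X': "X \<in> sets (U \<Otimes>\<^sub>M U)" using X by (simp add: sets_pair_measure_cong[OF sU sU])
  have "emeasure break_space X = emeasure (U \<Otimes>\<^sub>M U) X" unfolding break_space_def U_def by simp
  also have "\<dots> = (\<integral>\<^sup>+x. emeasure U (Pair x -` X) \<partial>U)"
    using U.emeasure_pair_measure_alt[OF X'] .
  also have "\<dots> = (\<integral>\<^sup>+x. emeasure lborel {y\<in>{0..1}. (x,y) \<in> X} \<partial>U)"
  proof (rule nn_integral_cong)
    fix x
    have m: "Pair x -` X \<in> sets borel" using sets_Pair1[OF X'] by simp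
    have "emeasure U (Pair x -` X) = emeasure lborel ({0..1} \<inter> Pair x -` X) / emeasure lborel {0..(1::real)}"
      unfolding U_def using m by (subst emeasure_uniform_measure) auto
    also have "\<dots> = emeasure lborel {y\<in>{0..1}. (x,y) \<in> X}" by (simp add: Int_def divide_ennreal_def)
    finally show "emeasure U (Pair x -` X) = emeasure lborel {y\<in>{0..1}. (x,y) \<in> X}" .
  qed
  also have "\<dots> = (\<integral>\<^sup>+x. emeasure lborel {y\<in>{0..1}. (x,y) \<in> X} * indicator {0..1} x \<partial>lborel)"
  proof -
    have mm: "(\<lambda>x. emeasure U (Pair x -` X)) \<in> borel_measurable U"
      using U.measurable_emeasure_Pair[OF X'] .
    have e: "(\<lambda>x. emeasure U (Pair x -` X)) = (\<lambda>x. emeasure lborel {y\<in>{0..1}. (x,y) \<in> X})"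
    proof
      fix x
      have m: "Pair x -` X \<in> sets borel" using sets_Pair1[OF X'] by simp
      show "emeasure U (Pair x -` X) = emeasure lborel {y\<in>{0..1}. (x,y) \<in> X}"
        unfolding U_def using m by (subst emeasure_uniform_measure) (simp_all add: Int_def divide_ennreal_def)
    qed
    have mm2: "(\<lambda>x. emeasure lborel {y\<in>{0..1}. (x,y) \<in> X}) \<in> borel_measurable lborel"
    proof -
      have "(borel_measurable U :: (real \<Rightarrow> ennreal) set) = borel_measurable lborel" by (intro measurable_cong_sets) auto
      moreover have "(\<lambda>x. emeasure lborel {y\<in>{0..1}. (x,y) \<in> X}) \<in> borel_measurable U" using mm unfolding e .
      ultimately show ?thesis by simp
    qed
    have "(\<integral>\<^sup>+x. emeasure lborel {y\<in>{0..1}. (x,y) \<in> X} \<partial>U) =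
       (\<integral>\<^sup>+x. emeasure lborel {y\<in>{0..1}. (x,y) \<in> X} * indicator {0..1} x \<partial>lborel) / emeasure lborel {0..(1::real)}"
      unfolding U_def by (rule nn_integral_uniform_measure[OF mm2]) simp
    also have "\<dots> = (\<integral>\<^sup>+x. emeasure lborel {y\<in>{0..1}. (x,y) \<in> X} * indicator {0..1} x \<partial>lborel)"
      by (simp only: emeasure_lborel_Icc) (simp add: divide_ennreal_def)
    finally show ?thesis .
  qed
  finally show ?thesis .
qed

lemma meas[measurable]: "(\<lambda>\<omega>::real\<times>real. tri_area (pieces (fst \<omega>) (snd \<omega>))) \<in> borel_measurable (borel \<Otimes>\<^sub>M borel)"
  unfolding tri_area_def pieces_def by (simp add: case_prod_beta Let_def)
lemma meas2[measurable]: "(\<lambda>\<omega>::real\<times>real. is_triangle (pieces (fst \<omega>) (snd \<omega>))) \<in> measurable (borel \<Otimes>\<^sub>M borel) (count_space UNIV)"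
  unfolding is_triangle_def pieces_def by (simp add: case_prod_beta Let_def)

definition Qe :: "real \<Rightarrow> real \<Rightarrow> real" where "Qe t w = t * w * (1/2 - t - w)"
definition Hh :: "real \<Rightarrow> real \<Rightarrow> real" where
  "Hh x y = (if x \<le> y then Qe (1/2 - x) (y - 1/2) else Qe (x - 1/2) (1/2 - y))"

lemma heron: "tri_area (pieces x y) = sqrt (Hh x y / 2)"
proof (cases "x \<le> y")
  case True
  then have p: "pieces x y = (x, y - x, 1 - y)" by (simp add: pieces_def min_def max_def)
  have e: "(x + (y - x) + (1 - y)) / 2 * ((x + (y - x) + (1 - y)) / 2 - x) * ((x + (y - x) + (1 - y)) / 2 - (y - x)) * ((x + (y - x) + (1 - y)) / 2 - (1 - y))
     = (1/2 - x) * (y - 1/2) * (1/2 - (1/2 - x) - (y - 1/2)) / 2"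
    by (simp add: field_simps)
  show ?thesis unfolding tri_area_def p Hh_def Qe_def Let_def prod.case if_P[OF True] e by simp
next
  case False
  then have p: "pieces x y = (y, x - y, 1 - x)" by (simp add: pieces_def min_def max_def)
  have e: "(y + (x - y) + (1 - x)) / 2 * ((y + (x - y) + (1 - x)) / 2 - y) * ((y + (x - y) + (1 - x)) / 2 - (x - y)) * ((y + (x - y) + (1 - x)) / 2 - (1 - x))
     = (x - 1/2) * (1/2 - y) * (1/2 - (x - 1/2) - (1/2 - y)) / 2"
    by (simp add: field_simps)
  show ?thesis unfolding tri_area_def p Hh_def Qe_def Let_def prod.case if_not_P[OF False] e by simp
qed

lemma area_iff: assumes "0 < A" shows "tri_area (pieces x y) > A \<longleftrightarrow> Hh x y > 2 * A\<^sup>2"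
proof -
  have "sqrt (Hh x y / 2) > A \<longleftrightarrow> Hh x y / 2 > A\<^sup>2"
    using assms by (metis abs_of_pos real_less_rsqrt real_sqrt_abs real_sqrt_less_iff)
  then show ?thesis by (simp add: heron mult.commute)
qed

lemma tri_iff: assumes "0 \<le> x" "x \<le> 1" "0 \<le> y" "y \<le> 1"
  shows "is_triangle (pieces x y) \<longleftrightarrow> Hh x y > 0"
proof (cases "x \<le> y")
  case True
  have "is_triangle (pieces x y) \<longleftrightarrow> (x < 1/2 \<and> y - x < 1/2 \<and> y > 1/2)"
    using True unfolding is_triangle_def pieces_def by (auto simp: min_def max_def abs_if)
  also have "\<dots> \<longleftrightarrow> Qe (1/2 - x) (y - 1/2) > 0"
    unfolding Qe_def using True assms
    by (auto simp: zero_less_mult_iff mult_less_0_iff)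
  finally show ?thesis using True by (simp add: Hh_def)
next
  case False
  have "is_triangle (pieces x y) \<longleftrightarrow> (y < 1/2 \<and> x - y < 1/2 \<and> x > 1/2)"
    using False unfolding is_triangle_def pieces_def by (auto simp: min_def max_def abs_if)
  also have "\<dots> \<longleftrightarrow> Qe (x - 1/2) (1/2 - y) > 0"
    unfolding Qe_def using False assms
    by (auto simp: zero_less_mult_iff mult_less_0_iff)
  finally show ?thesis using False by (simp add: Hh_def)
qed

definition Dd :: "real \<Rightarrow> real \<Rightarrow> real" where "Dd A t = (1/2 - t)\<^sup>2 - 8 * A\<^sup>2 / t"
definition hA :: "real \<Rightarrow> real \<Rightarrow> real" where
  "hA A t = (if 0 < t \<and> 0 < Dd A t then sqrt (Dd A t) else 0)"

lemma qe_iff: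
  assumes t: "0 < t"
  shows "Qe t w > 2 * A\<^sup>2 \<longleftrightarrow> 0 < Dd A t \<and> \<bar>w - (1/2 - t)/2\<bar> < sqrt (Dd A t) / 2"
proof -
  have id: "Qe t w - 2 * A\<^sup>2 = t * (Dd A t / 4 - (w - (1/2 - t)/2)\<^sup>2)"
    unfolding Qe_def Dd_def using t by (simp add: field_simps power2_eq_square)
  have "Qe t w > 2 * A\<^sup>2 \<longleftrightarrow> (w - (1/2 - t)/2)\<^sup>2 < Dd A t / 4"
  proof -
    have "Qe t w > 2 * A\<^sup>2 \<longleftrightarrow> 0 < t * (Dd A t / 4 - (w - (1/2 - t)/2)\<^sup>2)"
      using id by linarith
    also have "\<dots> \<longleftrightarrow> 0 < Dd A t / 4 - (w - (1/2 - t)/2)\<^sup>2" using t by (simp add: zero_less_mult_iff)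
    finally show ?thesis by linarith
  qed
  also have "\<dots> \<longleftrightarrow> 0 < Dd A t \<and> \<bar>w - (1/2 - t)/2\<bar> < sqrt (Dd A t) / 2"
  proof
    assume h: "(w - (1/2 - t)/2)\<^sup>2 < Dd A t / 4"
    have "0 \<le> (w - (1/2 - t)/2)\<^sup>2" by simp
    then have D: "0 < Dd A t" using h by linarith
    have "sqrt ((w - (1/2 - t)/2)\<^sup>2) < sqrt (Dd A t / 4)" using h by (simp only: real_sqrt_less_iff)
    then have "\<bar>w - (1/2 - t)/2\<bar> < sqrt (Dd A t / 4)" by simp
    also have "sqrt (Dd A t / 4) = sqrt (Dd A t) / 2" by (simp add: real_sqrt_divide)
    finally show "0 < Dd A t \<and> \<bar>w - (1/2 - t)/2\<bar> < sqrt (Dd A t) / 2" using D by simp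
  next
    assume h: "0 < Dd A t \<and> \<bar>w - (1/2 - t)/2\<bar> < sqrt (Dd A t) / 2"
    have "sqrt (Dd A t) / 2 = sqrt (Dd A t / 4)" by (simp add: real_sqrt_divide)
    then have "sqrt ((w - (1/2 - t)/2)\<^sup>2) < sqrt (Dd A t / 4)" using h by simp
    then show "(w - (1/2 - t)/2)\<^sup>2 < Dd A t / 4" by (simp only: real_sqrt_less_iff)
  qed
  finally show ?thesis .
qed

lemma slice_meas:
  assumes A: "0 \<le> A" and x: "0 \<le> x" "x \<le> 1"
  shows "emeasure lborel {y\<in>{0..1}. Hh x y > 2 * A\<^sup>2} = ennreal (hA A \<bar>x - 1/2\<bar>)"
proof -
  have A2: "0 \<le> 2 * A\<^sup>2" by simp
  consider "x < 1/2" | "x = 1/2" | "x > 1/2" by linarith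
  then show ?thesis
  proof cases
    case 1
    define t where "t = 1/2 - x"
    have t: "0 < t" using 1 t_def by simp
    have set: "{y\<in>{0..1}. Hh x y > 2 * A\<^sup>2} = {y. Qe t (y - 1/2) > 2 * A\<^sup>2}"
    proof (intro set_eqI iffI)
      fix y assume "y \<in> {y\<in>{0..1}. Hh x y > 2 * A\<^sup>2}"
      then have y: "0 \<le> y" "y \<le> 1" "Hh x y > 2 * A\<^sup>2" by auto
      show "y \<in> {y. Qe t (y - 1/2) > 2 * A\<^sup>2}"
      proof (cases "x \<le> y")
        case True then show ?thesis using y by (simp add: Hh_def t_def)
      next
        case False
        then have "Qe (x - 1/2) (1/2 - y) \<le> 0" using 1 y unfolding Qe_def
          by (auto simp: mult_le_0_iff zero_le_mult_iff)
        then show ?thesis using False y A2 by (simp add: Hh_def)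
      qed
    next
      fix y assume "y \<in> {y. Qe t (y - 1/2) > 2 * A\<^sup>2}"
      then have q: "Qe t (y - 1/2) > 2 * A\<^sup>2" by simp
      then have "0 < t * (y - 1/2) * (1/2 - t - (y - 1/2))" using A2 unfolding Qe_def by linarith
      then have "y > 1/2 \<and> y < 1 - t" using t 1 x unfolding t_def by (auto simp: zero_less_mult_iff mult_less_0_iff)
      then show "y \<in> {y\<in>{0..1}. Hh x y > 2 * A\<^sup>2}" using q 1 unfolding t_def by (auto simp: Hh_def)
    qed
    show ?thesis
    proof (cases "0 < Dd A t")
      case True
      have h: "\<And>y. Qe t (y - 1/2) > 2 * A\<^sup>2 \<longleftrightarrow> \<bar>y - 1/2 - (1/2 - t)/2\<bar> < sqrt (Dd A t) / 2"
        using qe_iff[OF t, of A] True by simp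
      have "{y. Qe t (y - 1/2) > 2 * A\<^sup>2} = {1/2 + (1/2 - t)/2 - sqrt (Dd A t)/2 <..< 1/2 + (1/2 - t)/2 + sqrt (Dd A t)/2}"
        by (intro set_eqI, simp only: mem_Collect_eq greaterThanLessThan_iff h abs_less_iff) arith
      then show ?thesis using set True t by (simp add: hA_def t_def abs_if)
    next
      case False
      have "{y. Qe t (y - 1/2) > 2 * A\<^sup>2} = {}" using qe_iff[OF t] False by auto
      then have e: "{y\<in>{0..1}. Hh x y > 2 * A\<^sup>2} = {}" using set by simp
      show ?thesis unfolding e using False t by (simp add: hA_def t_def abs_if)
    qed
  next
    case 2
    have "{y\<in>{0..1}. Hh x y > 2 * A\<^sup>2} = {}" using 2 A2 by (auto simp: Hh_def Qe_def 2)
    then show ?thesis using 2 by (simp only:) (simp add: hA_def)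
  next
    case 3
    define t where "t = x - 1/2"
    have t: "0 < t" using 3 t_def by simp
    have set: "{y\<in>{0..1}. Hh x y > 2 * A\<^sup>2} = {y. Qe t (1/2 - y) > 2 * A\<^sup>2}"
    proof (intro set_eqI iffI)
      fix y assume "y \<in> {y\<in>{0..1}. Hh x y > 2 * A\<^sup>2}"
      then have y: "0 \<le> y" "y \<le> 1" "Hh x y > 2 * A\<^sup>2" by auto
      show "y \<in> {y. Qe t (1/2 - y) > 2 * A\<^sup>2}"
      proof (cases "x \<le> y")
        case False then show ?thesis using y by (simp add: Hh_def t_def)
      next
        case True
        then have "Qe (1/2 - x) (y - 1/2) \<le> 0" using 3 y unfolding Qe_def
          by (auto simp: mult_le_0_iff zero_le_mult_iff)
        then show ?thesis using True y A2 by (simp add: Hh_def)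
      qed
    next
      fix y assume "y \<in> {y. Qe t (1/2 - y) > 2 * A\<^sup>2}"
      then have q: "Qe t (1/2 - y) > 2 * A\<^sup>2" by simp
      then have "0 < t * (1/2 - y) * (1/2 - t - (1/2 - y))" using A2 unfolding Qe_def by linarith
      then have "y < 1/2 \<and> y > t" using t 3 x unfolding t_def by (auto simp: zero_less_mult_iff mult_less_0_iff)
      then show "y \<in> {y\<in>{0..1}. Hh x y > 2 * A\<^sup>2}" using q 3 unfolding t_def by (auto simp: Hh_def)
    qed
    show ?thesis
    proof (cases "0 < Dd A t")
      case True
      have h: "\<And>y. Qe t (1/2 - y) > 2 * A\<^sup>2 \<longleftrightarrow> \<bar>1/2 - y - (1/2 - t)/2\<bar> < sqrt (Dd A t) / 2"
        using qe_iff[OF t, of A] True by simp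
      have "{y. Qe t (1/2 - y) > 2 * A\<^sup>2} = {1/2 - (1/2 - t)/2 - sqrt (Dd A t)/2 <..< 1/2 - (1/2 - t)/2 + sqrt (Dd A t)/2}"
        by (intro set_eqI, simp only: mem_Collect_eq greaterThanLessThan_iff h abs_less_iff) arith
      then show ?thesis using set True t by (simp add: hA_def t_def abs_if)
    next
      case False
      have "{y. Qe t (1/2 - y) > 2 * A\<^sup>2} = {}" using qe_iff[OF t] False by auto
      then have e: "{y\<in>{0..1}. Hh x y > 2 * A\<^sup>2} = {}" using set by simp
      show ?thesis unfolding e using False t by (simp add: hA_def t_def abs_if)
    qed
  qed
qed

definition Ek :: "real \<Rightarrow> real \<Rightarrow> real" where "Ek A k = k\<^sup>2 * (1 - k\<^sup>2)\<^sup>2 - (8 * A)\<^sup>2"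
definition Phi :: "real \<Rightarrow> real \<Rightarrow> real" where
  "Phi A k = (if 0 < Ek A k then sqrt (Ek A k) / 2 else 0)"

lemma hA_nonneg: "0 \<le> hA A t" unfolding hA_def by auto

lemma hA_meas[measurable]: "hA A \<in> borel_measurable borel"
  unfolding hA_def Dd_def by measurable

lemma hA_sub: assumes "0 \<le> k" shows "hA A (k\<^sup>2/2) * k = Phi A k"
proof (cases "k = 0")
  case True then show ?thesis by (simp add: hA_def Phi_def Ek_def)
next
  case False
  then have k: "0 < k" using assms by simp
  have D: "Dd A (k\<^sup>2/2) = Ek A k / (2 * k)\<^sup>2"
    unfolding Dd_def Ek_def using k by (simp add: field_simps power2_eq_square)
  have pos: "0 < Dd A (k\<^sup>2/2) \<longleftrightarrow> 0 < Ek A k" unfolding D using k by (simp add: zero_less_divide_iff)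
  have "sqrt (Dd A (k\<^sup>2/2)) * k = sqrt (Ek A k) / 2"
    unfolding D real_sqrt_divide real_sqrt_abs using k by simp
  then show ?thesis using k pos by (simp add: hA_def Phi_def)
qed

lemma integral_reduce:
  "(\<integral>\<^sup>+x. ennreal (hA A \<bar>x - 1/2\<bar>) * indicator {0..1} x \<partial>lborel)
     = 2 * (\<integral>\<^sup>+k. ennreal (Phi A k * indicator {0..1} k) \<partial>lborel)"
proof -
  define F where "F x = hA A \<bar>x - 1/2\<bar>" for x
  have Fm[measurable]: "F \<in> borel_measurable borel" unfolding F_def by measurable
  have F0: "F (1/2) = 0" by (simp add: F_def hA_def)
  have Fn: "0 \<le> F x" for x by (simp add: F_def hA_nonneg)
  have "(\<integral>\<^sup>+x. ennreal (hA A \<bar>x - 1/2\<bar>) * indicator {0..1} x \<partial>lborel)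
     = (\<integral>\<^sup>+x. ennreal (F x * indicator {1/2..1} x) + ennreal (F x * indicator {0..1/2} x) \<partial>lborel)"
  proof (rule nn_integral_cong)
    fix x :: real
    show "ennreal (hA A \<bar>x - 1/2\<bar>) * indicator {0..1} x = ennreal (F x * indicator {1/2..1} x) + ennreal (F x * indicator {0..1/2} x)"
    proof (cases "x = 1/2")
      case True
      then show ?thesis by (simp add: F_def hA_def)
    next
      case False
      then show ?thesis by (auto simp: F_def indicator_def)
    qed
  qed
  also have "\<dots> = (\<integral>\<^sup>+x. ennreal (F x * indicator {1/2..1} x) \<partial>lborel) + (\<integral>\<^sup>+x. ennreal (F x * indicator {0..1/2} x) \<partial>lborel)"
    by (rule nn_integral_add) auto
  also have "(\<integral>\<^sup>+x. ennreal (F x * indicator {0..1/2} x) \<partial>lborel) = (\<integral>\<^sup>+x. ennreal (F x * indicator {1/2..1} x) \<partial>lborel)"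
  proof -
    have "(\<integral>\<^sup>+x. ennreal (F x * indicator {0..1/2} x) \<partial>lborel)
        = (\<integral>\<^sup>+x. ennreal (F (1 - x) * indicator {0..1/2} (1 - x)) \<partial>lborel)"
      using nn_integral_real_affine[of "\<lambda>x. ennreal (F x * indicator {0..1/2} x)" "-1" 1] by simp
    also have "\<dots> = (\<integral>\<^sup>+x. ennreal (F x * indicator {1/2..1} x) \<partial>lborel)"
    proof -
      have "F (1 - x) = F x" for x unfolding F_def by (simp add: abs_minus_commute)
      moreover have "indicator {0..1/2} (1 - x) = (indicator {1/2..1} x :: real)" for x :: real
        by (auto simp: indicator_def)
      ultimately show ?thesis by simp
    qed
    finally show ?thesis .
  qed
  also have "(\<integral>\<^sup>+x. ennreal (F x * indicator {1/2..1} x) \<partial>lborel) = (\<integral>\<^sup>+k. ennreal (Phi A k * indicator {0..1} k) \<partial>lborel)"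
  proof -
    define g where "g k = 1/2 + k\<^sup>2/2" for k :: real
    have gi: "{g 0..g 1} = {1/2..1}" by (simp add: g_def)
    have "(\<integral>\<^sup>+x. ennreal (F x * indicator {g 0..g 1} x) \<partial>lborel) = (\<integral>\<^sup>+k. ennreal (F (g k) * k * indicator {0..1} k) \<partial>lborel)"
    proof (rule nn_integral_substitution)
      show "set_borel_measurable borel {g 0..g 1} F" unfolding set_borel_measurable_def by measurable
      show "(g has_real_derivative k) (at k)" for k unfolding g_def
        by (auto intro!: derivative_eq_intros)
      show "continuous_on {0..1} (\<lambda>k::real. k)" by (intro continuous_intros)
    qed auto
    also have "\<dots> = (\<integral>\<^sup>+k. ennreal (Phi A k * indicator {0..1} k) \<partial>lborel)"
    proof (rule nn_integral_cong)
      fix k :: real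
      show "ennreal (F (g k) * k * indicator {0..1} k) = ennreal (Phi A k * indicator {0..1} k)"
      proof (cases "k \<in> {0..1}")
        case True
        then have "F (g k) * k = Phi A k" unfolding F_def g_def using hA_sub[of k A] by simp
        then show ?thesis using True by simp
      qed simp
    qed
    finally show ?thesis unfolding gi .
  qed
  finally show ?thesis by (simp add: mult_2)
qed

lemma Phi0_int: "(\<integral>\<^sup>+k. ennreal (Phi 0 k * indicator {0..1} k) \<partial>lborel) = ennreal (1/8)"
proof -
  have "(\<integral>\<^sup>+k. ennreal (Phi 0 k * indicator {0..1} k) \<partial>lborel)
      = (\<integral>\<^sup>+k. ennreal ((k/2 - k^3/2)) * indicator {0..1} k \<partial>lborel)"
  proof (rule nn_integral_cong)
    fix k :: real
    show "ennreal (Phi 0 k * indicator {0..1} k) = ennreal ((k/2 - k^3/2)) * indicator {0..1} k"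
    proof (cases "k \<in> {0..1}")
      case True
      then have k: "0 \<le> k" "k \<le> 1" by auto
      have nn: "0 \<le> k * (1 - k\<^sup>2)" using k by (simp add: power_le_one)
      have "Ek 0 k = (k * (1 - k\<^sup>2))\<^sup>2" by (simp add: Ek_def power_mult_distrib)
      then have "Phi 0 k = k * (1 - k\<^sup>2) / 2" using nn by (auto simp: Phi_def)
      also have "\<dots> = k/2 - k^3/2" by (simp add: field_simps power2_eq_square power3_eq_cube)
      finally show ?thesis using True by simp
    qed simp
  qed
  also have "\<dots> = ennreal (1/8)"
  proof (rule nn_integral_has_integral_lebesgue')
    show "0 \<le> k/2 - k^3/2" if "k \<in> {0..1}" for k :: real
    proof -
      have "k*k \<le> 1" using that by (intro mult_le_one) auto
      then have "k*k*k \<le> 1*k" using that by (intro mult_right_mono) auto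
      then have "k^3 \<le> k" by (simp add: power3_eq_cube)
      then show ?thesis by simp
    qed
    have "((\<lambda>k::real. k/2 - k^3/2) has_integral ((1::real)^2/4 - 1^4/8 - (0^2/4 - 0^4/8))) {0..1}"
      by (rule fundamental_theorem_of_calculus)
         (auto intro!: derivative_eq_intros simp: has_real_derivative_iff_has_vector_derivative[symmetric] power2_eq_square power3_eq_cube)
    then show "((\<lambda>k::real. k/2 - k^3/2) has_integral (1/8)) {0..1}" by simp
  qed
  finally show ?thesis .
qed

lemma sq_mono_aux:
  fixes k m c :: real
  assumes "0 \<le> k" "k \<le> m" "0 \<le> c"
  shows "k\<^sup>2 + k * c \<le> m\<^sup>2 + m * c"
proof -
  have "k * k \<le> m * m" using assms by (intro mult_mono) auto
  moreover have "k * c \<le> m * c" using assms by (intro mult_right_mono) auto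
  ultimately show ?thesis by (simp add: power2_eq_square)
qed

lemma sq_smono_aux:
  fixes k m c :: real
  assumes "0 \<le> k" "k < m" "0 \<le> c"
  shows "k\<^sup>2 + k * c < m\<^sup>2 + m * c"
proof -
  have "k * k < m * m" using assms by (intro mult_strict_mono) auto
  moreover have "k * c \<le> m * c" using assms by (intro mult_right_mono) auto
  ultimately show ?thesis by (simp add: power2_eq_square)
qed

lemma PhiA0_int:
  fixes A0 \<mu>1 \<mu>2 :: real
  assumes A0: "0 < A0" and m: "0 < \<mu>1" "\<mu>1 < \<mu>2" "\<mu>2 < 1"
    and r1: "\<mu>1 * (1 - \<mu>1\<^sup>2) - 8 * A0 = 0"
    and r2: "\<mu>2 * (1 - \<mu>2\<^sup>2) - 8 * A0 = 0"
  shows "(\<integral>\<^sup>+k. ennreal (Phi A0 k * indicator {0..1} k) \<partial>lborel)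
        = ennreal (integral {\<mu>1..\<mu>2} (\<lambda>k. sqrt (k\<^sup>2 * (1 - k\<^sup>2)\<^sup>2 - (8 * A0)\<^sup>2)) / 2)"
    and "0 \<le> integral {\<mu>1..\<mu>2} (\<lambda>k. sqrt (k\<^sup>2 * (1 - k\<^sup>2)\<^sup>2 - (8 * A0)\<^sup>2))"
proof -
  define p where "p k = k * (1 - k\<^sup>2) - 8 * A0" for k :: real
  have f1: "p k = (k - \<mu>1) * (1 - (k\<^sup>2 + k * \<mu>1 + \<mu>1\<^sup>2))" for k
    using r1 unfolding p_def by (simp add: algebra_simps power2_eq_square) 
  have f2: "p k = (k - \<mu>2) * (1 - (k\<^sup>2 + k * \<mu>2 + \<mu>2\<^sup>2))" for k
    using r2 unfolding p_def by (simp add: algebra_simps power2_eq_square)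
  have key: "\<mu>2\<^sup>2 + \<mu>2 * \<mu>1 + \<mu>1\<^sup>2 = 1"
  proof -
    have "p \<mu>2 = 0" using r2 by (simp add: p_def)
    then have "(\<mu>2 - \<mu>1) * (1 - (\<mu>2\<^sup>2 + \<mu>2 * \<mu>1 + \<mu>1\<^sup>2)) = 0" using f1[of \<mu>2] by simp
    then show ?thesis using m by simp
  qed
  have Ef: "Ek A0 k = p k * (k * (1 - k\<^sup>2) + 8 * A0)" for k
    unfolding Ek_def p_def by (simp add: algebra_simps power2_eq_square)
  have pos2: "0 < k * (1 - k\<^sup>2) + 8 * A0" if "0 \<le> k" "k \<le> 1" for k
  proof -
    have "k\<^sup>2 \<le> 1" using that by (simp add: power_le_one)
    then have "0 \<le> k * (1 - k\<^sup>2)" using that by simp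
    then show ?thesis using A0 by simp
  qed
  have inside: "0 \<le> p k" if "\<mu>1 \<le> k" "k \<le> \<mu>2" for k
  proof -
    have "k\<^sup>2 + k * \<mu>1 \<le> \<mu>2\<^sup>2 + \<mu>2 * \<mu>1" using sq_mono_aux[of k \<mu>2 \<mu>1] that m by simp
    then have "0 \<le> 1 - (k\<^sup>2 + k * \<mu>1 + \<mu>1\<^sup>2)" using key by linarith
    then show ?thesis unfolding f1 using that by simp
  qed
  have below: "p k < 0" if "0 \<le> k" "k < \<mu>1" for k
  proof -
    have "k\<^sup>2 + k * \<mu>1 < \<mu>2\<^sup>2 + \<mu>2 * \<mu>1" using sq_smono_aux[of k \<mu>2 \<mu>1] that m by simp
    then have "0 < 1 - (k\<^sup>2 + k * \<mu>1 + \<mu>1\<^sup>2)" using key by linarith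
    then show ?thesis unfolding f1 using that by (simp add: mult_neg_pos)
  qed
  have above: "p k < 0" if "\<mu>2 < k" for k
  proof -
    have "\<mu>1\<^sup>2 + \<mu>1 * \<mu>2 < k\<^sup>2 + k * \<mu>2" using sq_smono_aux[of \<mu>1 k \<mu>2] that m by simp
    then have "1 - (k\<^sup>2 + k * \<mu>2 + \<mu>2\<^sup>2) < 0" using key by (simp add: algebra_simps)
    then show ?thesis unfolding f2 using that by (simp add: mult_pos_neg)
  qed
  define G where "G k = sqrt (k\<^sup>2 * (1 - k\<^sup>2)\<^sup>2 - (8 * A0)\<^sup>2)" for k :: real
  have GE: "G k = sqrt (Ek A0 k)" for k by (simp add: G_def Ek_def)
  have Gnn: "0 \<le> G k" if "k \<in> {\<mu>1..\<mu>2}" for k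
  proof -
    have "0 \<le> Ek A0 k" unfolding Ef using inside[of k] pos2[of k] that m by auto
    then show ?thesis by (simp add: GE)
  qed
  have pw: "ennreal (Phi A0 k * indicator {0..1} k) = ennreal (G k / 2) * indicator {\<mu>1..\<mu>2} k" for k
  proof (cases "k \<in> {\<mu>1..\<mu>2}")
    case True
    have "0 \<le> Ek A0 k" unfolding Ef using inside[of k] pos2[of k] True m by auto
    then have ph: "Phi A0 k = G k / 2" unfolding Phi_def GE by auto
    have "k \<in> {0..1}" using True m by auto
    then show ?thesis using True by (simp add: ph)
  next
    case False
    show ?thesis
    proof (cases "k \<in> {0..1}")
      case True
      then have "p k < 0" using below[of k] above[of k] False by auto
      then have "Ek A0 k \<le> 0" unfolding Ef using pos2[of k] True by (auto simp: mult_neg_pos less_imp_le)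
      then have "Phi A0 k = 0" unfolding Phi_def by auto
      then show ?thesis using False by simp
    next
      case False': False
      then show ?thesis using False by simp
    qed
  qed
  have cont: "continuous_on {\<mu>1..\<mu>2} G" unfolding G_def by (intro continuous_intros)
  have hi: "(G has_integral integral {\<mu>1..\<mu>2} G) {\<mu>1..\<mu>2}"
    by (rule integrable_integral, rule integrable_continuous_interval, rule cont)
  show "0 \<le> integral {\<mu>1..\<mu>2} (\<lambda>k. sqrt (k\<^sup>2 * (1 - k\<^sup>2)\<^sup>2 - (8 * A0)\<^sup>2))"
    using has_integral_nonneg[OF hi Gnn] unfolding G_def by simp
  have "(\<integral>\<^sup>+k. ennreal (Phi A0 k * indicator {0..1} k) \<partial>lborel)
      = (\<integral>\<^sup>+k. ennreal (G k / 2) * indicator {\<mu>1..\<mu>2} k \<partial>lborel)"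
    by (simp only: pw)
  also have "\<dots> = ennreal (integral {\<mu>1..\<mu>2} G / 2)"
    by (rule nn_integral_has_integral_lebesgue') (use Gnn has_integral_divide[OF hi] in auto)
  finally show "(\<integral>\<^sup>+k. ennreal (Phi A0 k * indicator {0..1} k) \<partial>lborel)
        = ennreal (integral {\<mu>1..\<mu>2} (\<lambda>k. sqrt (k\<^sup>2 * (1 - k\<^sup>2)\<^sup>2 - (8 * A0)\<^sup>2)) / 2)"
    unfolding G_def .
qed

theorem mainTheorem2:
  fixes A0 \<mu>1 \<mu>2 :: real
  assumes "0 < A0" and "A0 < sqrt 3 / 36"
    and "0 < \<mu>1" and "\<mu>1 < \<mu>2" and "\<mu>2 < 1"
    and "\<mu>1 * (1 - \<mu>1\<^sup>2) - 8 * A0 = 0"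
    and "\<mu>2 * (1 - \<mu>2\<^sup>2) - 8 * A0 = 0"
    and "\<And>k. 0 < k \<Longrightarrow> k < 1 \<Longrightarrow> k * (1 - k\<^sup>2) - 8 * A0 = 0 \<Longrightarrow> k = \<mu>1 \<or> k = \<mu>2"
  shows "\<P>(\<omega> in break_space. tri_area (pieces (fst \<omega>) (snd \<omega>)) > A0
            \<bar> is_triangle (pieces (fst \<omega>) (snd \<omega>)))
         = 4 * integral {\<mu>1..\<mu>2} (\<lambda>k. sqrt (k\<^sup>2 * (1 - k\<^sup>2)\<^sup>2 - (8 * A0)\<^sup>2))"
proof -
  define J where "J = integral {\<mu>1..\<mu>2} (\<lambda>k. sqrt (k\<^sup>2 * (1 - k\<^sup>2)\<^sup>2 - (8 * A0)\<^sup>2))"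
  have PI: "(\<integral>\<^sup>+k. ennreal (Phi A0 k * indicator {0..1} k) \<partial>lborel) = ennreal (J / 2)" "0 \<le> J"
    using PhiA0_int[OF assms(1,3,4,5,6,7)] unfolding J_def by auto
  have sp: "space break_space = UNIV" by (simp add: break_space_def space_pair_measure)
  define S1 where "S1 = {\<omega>::real\<times>real. A0 < tri_area (pieces (fst \<omega>) (snd \<omega>)) \<and> is_triangle (pieces (fst \<omega>) (snd \<omega>))}"
  define S2 where "S2 = {\<omega>::real\<times>real. is_triangle (pieces (fst \<omega>) (snd \<omega>))}"
  have "{\<omega> \<in> space (borel \<Otimes>\<^sub>M borel). A0 < tri_area (pieces (fst \<omega>) (snd \<omega>)) \<and> is_triangle (pieces (fst \<omega>) (snd \<omega>))} \<in> sets (borel \<Otimes>\<^sub>M borel)"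
    by measurable
  then have S1m: "S1 \<in> sets (borel \<Otimes>\<^sub>M borel)" unfolding S1_def by (simp add: space_pair_measure)
  have "{\<omega> \<in> space (borel \<Otimes>\<^sub>M borel). is_triangle (pieces (fst \<omega>) (snd \<omega>))} \<in> sets (borel \<Otimes>\<^sub>M borel)"
    by measurable
  then have S2m: "S2 \<in> sets (borel \<Otimes>\<^sub>M borel)" unfolding S2_def by (simp add: space_pair_measure)
  have e1: "emeasure break_space S1 = ennreal J"
  proof -
    have "emeasure break_space S1 = (\<integral>\<^sup>+x. emeasure lborel {y\<in>{0..1}. (x,y) \<in> S1} * indicator {0..1} x \<partial>lborel)"
      by (rule slice_lemma[OF S1m])
    also have "\<dots> = (\<integral>\<^sup>+x. ennreal (hA A0 \<bar>x - 1/2\<bar>) * indicator {0..1} x \<partial>lborel)"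
    proof (rule nn_integral_cong)
      fix x :: real
      show "emeasure lborel {y\<in>{0..1}. (x,y) \<in> S1} * indicator {0..1} x = ennreal (hA A0 \<bar>x - 1/2\<bar>) * indicator {0..1} x"
      proof (cases "x \<in> {0..1}")
        case True
        have "{y\<in>{0..1}. (x,y) \<in> S1} = {y\<in>{0..1}. Hh x y > 2 * A0\<^sup>2}"
        proof (intro set_eqI iffI)
          fix y assume "y \<in> {y\<in>{0..1}. (x,y) \<in> S1}"
          then show "y \<in> {y\<in>{0..1}. Hh x y > 2 * A0\<^sup>2}" using area_iff[OF assms(1)] by (auto simp: S1_def)
        next
          fix y assume y: "y \<in> {y\<in>{0..1}. Hh x y > 2 * A0\<^sup>2}"
          have "0 \<le> 2 * A0\<^sup>2" by simp
          moreover have "2 * A0\<^sup>2 < Hh x y" using y by simp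
          ultimately have "Hh x y > 0" by linarith
          then show "y \<in> {y\<in>{0..1}. (x,y) \<in> S1}" using y True area_iff[OF assms(1)] tri_iff[of x y] by (auto simp: S1_def)
        qed
        then show ?thesis using slice_meas[of A0 x] True assms(1) by simp
      qed simp
    qed
    also have "\<dots> = 2 * ennreal (J / 2)" using integral_reduce PI(1) by simp
    also have "\<dots> = ennreal J" using ennreal_mult[of 2 "J/2"] PI(2) by simp
    finally show ?thesis .
  qed
  have e2: "emeasure break_space S2 = ennreal (1/4)"
  proof -
    have "emeasure break_space S2 = (\<integral>\<^sup>+x. emeasure lborel {y\<in>{0..1}. (x,y) \<in> S2} * indicator {0..1} x \<partial>lborel)"
      by (rule slice_lemma[OF S2m])
    also have "\<dots> = (\<integral>\<^sup>+x. ennreal (hA 0 \<bar>x - 1/2\<bar>) * indicator {0..1} x \<partial>lborel)"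
    proof (rule nn_integral_cong)
      fix x :: real
      show "emeasure lborel {y\<in>{0..1}. (x,y) \<in> S2} * indicator {0..1} x = ennreal (hA 0 \<bar>x - 1/2\<bar>) * indicator {0..1} x"
      proof (cases "x \<in> {0..1}")
        case True
        have "{y\<in>{0..1}. (x,y) \<in> S2} = {y\<in>{0..1}. Hh x y > 2 * 0\<^sup>2}"
          using True tri_iff[of x] by (auto simp: S2_def)
        then show ?thesis using slice_meas[of 0 x] True by simp
      qed simp
    qed
    also have "\<dots> = 2 * ennreal (1/8)" using integral_reduce Phi0_int by simp
    also have "\<dots> = ennreal (1/4)" using ennreal_mult[of 2 "1/8"] by simp
    finally show ?thesis .
  qed
  have m1: "measure break_space S1 = J" using e1 PI(2) by (simp add: measure_def)
  have m2: "measure break_space S2 = 1/4" using e2 by (simp add: measure_def)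
  have "\<P>(\<omega> in break_space. tri_area (pieces (fst \<omega>) (snd \<omega>)) > A0
            \<bar> is_triangle (pieces (fst \<omega>) (snd \<omega>))) = measure break_space S1 / measure break_space S2"
    unfolding cond_prob_def sp S1_def S2_def by simp
  also have "\<dots> = 4 * J" unfolding m1 m2 by simp
  finally show ?thesis unfolding J_def .
qed

end
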